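(* Let $\mu\in[0,1)$ and $\sigma>1$. For $Z\in[0,1]$ let \[ \delta(Z)=1-\frac{\mu}{\sigma}Z-\frac{\sigma-1}{\sigma}Z^2,\quad A(Z)=\frac{1}{\delta(Z)}\left[1+\frac{\mu}{\sigma-1}Z-\left(1+\frac{\mu^2}{\sigma-1}\right)Z^2\right],\quad B(Z)=-\frac{(\mu Z-1)^2}{\delta(Z)}, \] and let \[ Z^*=\frac{\mu(2\sigma-1)}{\sigma(1+\mu^2)-1}. \] Then for $Z\in(0,1]$: $A(Z)+B(Z)>0$ if $Z<Z^*$, and $A(Z)+B(Z)<0$ if $Z>Z^*$.
   Context: One has $\delta(Z)>0$ for all $Z\in[0,1]$, so $A$ and $B$ are well defined there. *)

theory Defs
  imports Complex_Main
begin

definition delta :: "real \<Rightarrow> real \<Rightarrow> real \<Rightarrow> real" where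
  "delta \<mu> \<sigma> Z = 1 - (\<mu> / \<sigma>) * Z - ((\<sigma> - 1) / \<sigma>) * Z^2"

definition A_fun :: "real \<Rightarrow> real \<Rightarrow> real \<Rightarrow> real" where
  "A_fun \<mu> \<sigma> Z = (1 / delta \<mu> \<sigma> Z) *
     (1 + (\<mu> / (\<sigma> - 1)) * Z - (1 + \<mu>^2 / (\<sigma> - 1)) * Z^2)"

definition B_fun :: "real \<Rightarrow> real \<Rightarrow> real \<Rightarrow> real" where
  "B_fun \<mu> \<sigma> Z = - ((\<mu> * Z - 1)^2 / delta \<mu> \<sigma> Z)"

definition Z_star :: "real \<Rightarrow> real \<Rightarrow> real" where
  "Z_star \<mu> \<sigma> = \<mu> * (2 * \<sigma> - 1) / (\<sigma> * (1 + \<mu>^2) - 1)"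

end

theory Submission
  imports Defs
begin

lemma num_id:
  fixes s m Z :: real
  assumes h: "s - 1 \<noteq> 0"
  shows "(1 + (m / (s - 1)) * Z - (1 + m^2 / (s - 1)) * Z^2) - (m * Z - 1)^2
       = Z * (m * (2 * s - 1) - Z * (s * (1 + m^2) - 1)) / (s - 1)"
proof -
  define t where "t = inverse (s - 1)"
  have ht: "(s - 1) * t = 1" using h by (simp add: t_def)
  show ?thesis unfolding divide_inverse t_def[symmetric] using ht by algebra
qed

theorem lemma3:
  fixes \<mu> \<sigma> Z :: real
  assumes "0 \<le> \<mu>" and "\<mu> < 1" and "\<sigma> > 1"
    and "0 < Z" and "Z \<le> 1"
  shows "(Z < Z_star \<mu> \<sigma> \<longrightarrow> A_fun \<mu> \<sigma> Z + B_fun \<mu> \<sigma> Z > 0)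
       \<and> (Z > Z_star \<mu> \<sigma> \<longrightarrow> A_fun \<mu> \<sigma> Z + B_fun \<mu> \<sigma> Z < 0)"
proof -
  define D where "D = \<sigma> * (1 + \<mu>^2) - 1"
  have "\<sigma> * \<mu>^2 \<ge> 0" using assms by simp
  moreover have "D = \<sigma> + \<sigma> * \<mu>^2 - 1" unfolding D_def by (simp add: algebra_simps)
  ultimately have Dpos: "D > 0" using assms by linarith
  have "\<sigma> * delta \<mu> \<sigma> Z = \<sigma> - \<mu> * Z - (\<sigma> - 1) * Z^2"
  proof -
    have "\<sigma> * delta \<mu> \<sigma> Z = \<sigma> - (\<sigma> * (\<mu> / \<sigma>)) * Z - (\<sigma> * ((\<sigma> - 1) / \<sigma>)) * Z^2"
      unfolding delta_def by (simp add: algebra_simps)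
    also have "\<sigma> * (\<mu> / \<sigma>) = \<mu>" using assms by simp
    also have "\<sigma> * ((\<sigma> - 1) / \<sigma>) = \<sigma> - 1" using assms by simp
    finally show ?thesis .
  qed
  also have "\<dots> \<ge> \<sigma> - \<mu> - (\<sigma> - 1)"
  proof -
    have "\<mu> * Z \<le> \<mu>" using assms by (simp add: mult_left_le)
    moreover have "Z^2 \<le> 1" using assms by (simp add: power_le_one)
    hence "(\<sigma> - 1) * Z^2 \<le> \<sigma> - 1" using assms by (simp add: mult_left_le)
    ultimately show ?thesis by linarith
  qed
  finally have "\<sigma> * delta \<mu> \<sigma> Z > 0" using assms by linarith
  hence dpos: "delta \<mu> \<sigma> Z > 0" using assms by (simp add: zero_less_mult_iff)
  have eq: "A_fun \<mu> \<sigma> Z + B_fun \<mu> \<sigma> Z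
      = Z * (\<mu> * (2 * \<sigma> - 1) - Z * D) / ((\<sigma> - 1) * delta \<mu> \<sigma> Z)"
  proof -
    have s1: "\<sigma> - 1 \<noteq> 0" using assms by simp
    have "A_fun \<mu> \<sigma> Z + B_fun \<mu> \<sigma> Z = ((1 + (\<mu> / (\<sigma> - 1)) * Z - (1 + \<mu>^2 / (\<sigma> - 1)) * Z^2) - (\<mu> * Z - 1)^2) / delta \<mu> \<sigma> Z"
      unfolding A_fun_def B_fun_def by (simp add: diff_divide_distrib)
    also have "(1 + (\<mu> / (\<sigma> - 1)) * Z - (1 + \<mu>^2 / (\<sigma> - 1)) * Z^2) - (\<mu> * Z - 1)^2
       = Z * (\<mu> * (2 * \<sigma> - 1) - Z * D) / (\<sigma> - 1)"
      using s1 unfolding D_def by (rule num_id)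
    finally show ?thesis by simp
  qed
  have zs: "Z_star \<mu> \<sigma> = \<mu> * (2 * \<sigma> - 1) / D" by (simp add: Z_star_def D_def)
  have den: "(\<sigma> - 1) * delta \<mu> \<sigma> Z > 0" using assms dpos by simp
  show ?thesis
  proof safe
    assume "Z < Z_star \<mu> \<sigma>"
    hence "Z * D < \<mu> * (2 * \<sigma> - 1)" using Dpos zs by (simp add: pos_less_divide_eq)
    thus "A_fun \<mu> \<sigma> Z + B_fun \<mu> \<sigma> Z > 0" using eq den assms by simp
  next
    assume "Z > Z_star \<mu> \<sigma>"
    hence "Z * D > \<mu> * (2 * \<sigma> - 1)" using Dpos zs by (simp add: pos_divide_less_eq)
    thus "A_fun \<mu> \<sigma> Z + B_fun \<mu> \<sigma> Z < 0" using eq den assms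
      by (simp add: divide_less_0_iff mult_pos_neg)
  qed
qed

end
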